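(* Let $G$ be a connected weighted multigraph on the vertex set $V$, $|V|=n\ge 2$, with positive edge weights, weighted adjacency matrix $A$ and spectral radius $\rho=\rho(A)$. For $t\in(0,\rho^{-1})$ let $R_t=(I-tA)^{-1}=(r_{ij}(t))$ and $d_t(i,j)=\tfrac12\bigl(\ln r_{ii}(t)+\ln r_{jj}(t)\bigr)-\ln r_{ij}(t)$. Then for all distinct $i,j\in V$ and all $t\in(0,\rho^{-1})$, $$d_t(i,j)=-\tfrac12\ln\Bigl(\bigl(t^{-1}I-A_{jj}\bigr)^{-1}_i\,a_{\setminus j\,j}\;\bigl(t^{-1}I-A_{ii}\bigr)^{-1}_j\,a_{\setminus i\,i}\Bigr).$$
   Context: $G$ may have loops and multiple edges; $A=(a_{ij})$ has $a_{ij}$ equal to the sum of weights of the edges joining $i$ and $j$. All matrices are indexed by the vertices. For a matrix $M$ and vertex $j$, $M_{jj}$ is the submatrix obtained by deleting row $j$ and column $j$ (its rows and columns remain indexed by $V\setminus\{j\}$); for an invertible matrix $N$, $N^{-1}_i$ denotes the row of $N^{-1}$ indexed by vertex $i$; $a_{\setminus j\,j}$ is the $j$th column of $A$ with the entry $a_{jj}$ removed (a vector indexed by $V\setminus\{j\}$). *)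

theory Defs
  imports "Jordan_Normal_Form.Spectral_Radius" "Jordan_Normal_Form.Gauss_Jordan_Elimination"
begin

text \<open>Vertices are 0..<n. A weighted multigraph is given by a finite edge set E,
  an endpoint map (a set of one vertex for a loop, two vertices otherwise) and
  positive weights.\<close>

definition wadj :: "nat \<Rightarrow> 'e set \<Rightarrow> ('e \<Rightarrow> nat set) \<Rightarrow> ('e \<Rightarrow> real) \<Rightarrow> real mat" where
  "wadj n E ends w = mat n n (\<lambda>(i,j). \<Sum>e\<in>{e\<in>E. ends e = {i,j}}. w e)"

definition multigraph_connected :: "nat \<Rightarrow> 'e set \<Rightarrow> ('e \<Rightarrow> nat set) \<Rightarrow> bool" where
  "multigraph_connected n E ends \<longleftrightarrow>
     (\<forall>i<n. \<forall>j<n. (\<lambda>x y. \<exists>e\<in>E. ends e = {x,y})\<^sup>*\<^sup>* i j)"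

definition resolvent :: "real mat \<Rightarrow> real \<Rightarrow> real mat" where
  "resolvent A t = the (mat_inverse (1\<^sub>m (dim_row A) - t \<cdot>\<^sub>m A))"

definition dist_t :: "real mat \<Rightarrow> real \<Rightarrow> nat \<Rightarrow> nat \<Rightarrow> real" where
  "dist_t A t i j = (ln (resolvent A t $$ (i,i)) + ln (resolvent A t $$ (j,j))) / 2
                    - ln (resolvent A t $$ (i,j))"

text \<open>Position of vertex i (i \<noteq> j) among the remaining vertices after deleting j.\<close>
definition del_pos :: "nat \<Rightarrow> nat \<Rightarrow> nat" where
  "del_pos j i = (if i < j then i else i - 1)"

definition vec_delete :: "'a vec \<Rightarrow> nat \<Rightarrow> 'a vec" where
  "vec_delete v j = vec (dim_vec v - 1) (\<lambda>k. v $ insert_index j k)"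

definition cut_term :: "real mat \<Rightarrow> real \<Rightarrow> nat \<Rightarrow> nat \<Rightarrow> real" where
  "cut_term A t i j =
     row (the (mat_inverse ((1/t) \<cdot>\<^sub>m 1\<^sub>m (dim_row A - 1) - mat_delete A j j))) (del_pos j i)
       \<bullet> vec_delete (col A j) j"

end

theory Submission imports Defs begin

lemma inv_exists:
  fixes M :: "real mat"
  assumes M: "M \<in> carrier_mat n n" and d: "det M \<noteq> 0"
  shows "\<exists>B. mat_inverse M = Some B \<and> M * B = 1\<^sub>m n \<and> B * M = 1\<^sub>m n \<and> B \<in> carrier_mat n n"
proof (cases "mat_inverse M")
  case None
  have "M \<notin> Units (ring_mat TYPE(real) n undefined)" by (rule mat_inverse(1)[OF M None])
  with det_non_zero_imp_unit[OF M d, of undefined] show ?thesis by blast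
next
  case (Some B) then show ?thesis using mat_inverse(2)[OF M Some] by simp
qed

lemma smult_smult_mat': "a \<cdot>\<^sub>m (b \<cdot>\<^sub>m X) = (a * b :: 'a :: semigroup_mult) \<cdot>\<^sub>m X"
  by (rule eq_matI) (auto simp: mult.assoc)

lemma smult_pow_mat: fixes X :: "'a :: comm_ring_1 mat" shows "X \<in> carrier_mat n n \<Longrightarrow> (c \<cdot>\<^sub>m X) ^\<^sub>m k = (c ^ k) \<cdot>\<^sub>m (X ^\<^sub>m k)"
proof (induct k)
  case 0 then show ?case by auto
next
  case (Suc k)
  have "(c \<cdot>\<^sub>m X) ^\<^sub>m Suc k = ((c ^ k) \<cdot>\<^sub>m (X ^\<^sub>m k)) * (c \<cdot>\<^sub>m X)" using Suc by simp
  also have "\<dots> = (c^k * c) \<cdot>\<^sub>m ((X ^\<^sub>m k) * X)"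
  proof -
    have P: "X ^\<^sub>m k \<in> carrier_mat n n" using Suc(2) by (rule pow_carrier_mat)
    have cX: "c \<cdot>\<^sub>m X \<in> carrier_mat n n" using Suc(2) by simp
    show ?thesis
      unfolding mult_smult_assoc_mat[OF P cX] mult_smult_distrib[OF P Suc(2)] smult_smult_mat' ..
  qed
  finally show ?case by (simp add: mult.commute)
qed

lemma smult_mat_vec': "X \<in> carrier_mat n m \<Longrightarrow> v \<in> carrier_vec m \<Longrightarrow> (c \<cdot>\<^sub>m X) *\<^sub>v v = (c :: 'a :: comm_ring_1) \<cdot>\<^sub>v (X *\<^sub>v v)"
  by (rule eq_vecI) (auto simp: scalar_prod_def sum_distrib_left ac_simps)

lemma power_decay:
  fixes A :: "real mat"
  assumes A: "A \<in> carrier_mat n n" and n: "n > 0" and t: "0 < t"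
    and tr: "t < 1 / spectral_radius (map_mat complex_of_real A)"
  shows "\<exists>c q. 0 \<le> q \<and> q < 1 \<and> (\<forall>k i j. i < n \<longrightarrow> j < n \<longrightarrow> \<bar>t ^ k * (A ^\<^sub>m k) $$ (i,j)\<bar> \<le> c * q ^ k)"
proof -
  define CA where "CA = map_mat complex_of_real A"
  define \<rho> where "\<rho> = spectral_radius CA"
  have CA: "CA \<in> carrier_mat n n" using A unfolding CA_def by auto
  have "1 / \<rho> > 0" using t tr unfolding \<rho>_def CA_def by linarith
  hence rp: "\<rho> > 0" by (simp add: zero_less_divide_iff)
  define t' where "t' = (t + 1/\<rho>)/2"
  have tt': "t < t'" "t' < 1/\<rho>" using tr unfolding t'_def \<rho>_def CA_def by auto
  have t'p: "t' > 0" using tt' t by auto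
  have t'r: "t' * \<rho> < 1" using tt'(2) rp by (simp add: field_simps)
  define B where "B = complex_of_real t' \<cdot>\<^sub>m CA"
  have B: "B \<in> carrier_mat n n" using CA unfolding B_def by auto
  have "spectral_radius B < 1"
  proof -
    have "spectral_radius B \<in> norm ` spectrum B" by (rule spectral_radius_mem_max(1)[OF B n])
    then obtain \<mu> where mu: "\<mu> \<in> spectrum B" and eq: "spectral_radius B = norm \<mu>" by auto
    from mu obtain v where ev: "eigenvector B v \<mu>" unfolding spectrum_def eigenvalue_def by auto
    hence v: "v \<in> carrier_vec n" "v \<noteq> 0\<^sub>v n" "B *\<^sub>v v = \<mu> \<cdot>\<^sub>v v"
      using B unfolding eigenvector_def by auto
    have Bv: "B *\<^sub>v v = complex_of_real t' \<cdot>\<^sub>v (CA *\<^sub>v v)" unfolding B_def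
      using CA v(1) by (rule smult_mat_vec')
    have ne: "complex_of_real t' \<noteq> 0" using t'p by simp
    have "CA *\<^sub>v v = (1 / complex_of_real t' * complex_of_real t') \<cdot>\<^sub>v (CA *\<^sub>v v)"
      using ne by simp
    also have "\<dots> = (1 / complex_of_real t') \<cdot>\<^sub>v (B *\<^sub>v v)" unfolding Bv smult_smult_assoc ..
    also have "\<dots> = (\<mu> / complex_of_real t') \<cdot>\<^sub>v v" unfolding v(3) smult_smult_assoc by simp
    finally have "CA *\<^sub>v v = (\<mu> / complex_of_real t') \<cdot>\<^sub>v v" .
    hence "eigenvector CA v (\<mu> / complex_of_real t')" using v CA unfolding eigenvector_def by auto
    hence "norm (\<mu> / complex_of_real t') \<in> norm ` spectrum CA"
      unfolding spectrum_def eigenvalue_def by auto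
    from spectral_radius_mem_max(2)[OF CA n this]
    have "norm \<mu> / t' \<le> \<rho>" unfolding \<rho>_def using t'p by (simp add: norm_divide)
    hence "norm \<mu> \<le> t' * \<rho>" using t'p by (simp add: field_simps)
    thus ?thesis using eq t'r by auto
  qed
  from spectral_radius_jnf_norm_bound_less_1_upper_triangular[OF B this]
  obtain c where c: "\<And>k. norm_bound (B ^\<^sub>m k) c" by auto
  show ?thesis
  proof (intro exI conjI allI impI)
    show "0 \<le> t / t'" using t t'p by auto
    show "t / t' < 1" using tt' t'p by auto
    fix k i j assume ij: "i < n" "j < n"
    have "B ^\<^sub>m k = complex_of_real t' ^ k \<cdot>\<^sub>m (CA ^\<^sub>m k)"
      unfolding B_def by (rule smult_pow_mat[OF CA])
    also have "CA ^\<^sub>m k = map_mat complex_of_real (A ^\<^sub>m k)"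
      unfolding CA_def by (rule of_real_hom.mat_hom_pow[OF A, symmetric])
    finally have "(B ^\<^sub>m k) $$ (i,j) = complex_of_real (t' ^ k * (A ^\<^sub>m k) $$ (i,j))"
      using ij A by (simp add: pow_carrier_mat)
    moreover have "norm ((B ^\<^sub>m k) $$ (i,j)) \<le> c"
      using c[of k] ij B unfolding norm_bound_def by (auto simp: pow_carrier_mat)
    ultimately have b: "\<bar>t' ^ k * (A ^\<^sub>m k) $$ (i,j)\<bar> \<le> c" by (simp del: of_real_mult of_real_power)
    have "\<bar>t ^ k * (A ^\<^sub>m k) $$ (i,j)\<bar> = (t/t')^k * \<bar>t' ^ k * (A ^\<^sub>m k) $$ (i,j)\<bar>"
      using t t'p by (simp add: abs_mult power_divide)
    also have "\<dots> \<le> (t/t')^k * c" using b t t'p by (intro mult_left_mono) auto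
    finally show "\<bar>t ^ k * (A ^\<^sub>m k) $$ (i,j)\<bar> \<le> c * (t/t')^k" by (simp add: mult.commute)
  qed
qed



lemma row_bound:
  fixes X :: "real mat"
  assumes X: "X \<in> carrier_mat n n" and i: "i < n" and w: "w \<in> carrier_vec n"
    and b: "\<And>l. l < n \<Longrightarrow> \<bar>X $$ (i,l)\<bar> \<le> b"
  shows "\<bar>row X i \<bullet> w\<bar> \<le> b * (\<Sum>l<n. \<bar>w $ l\<bar>)"
proof -
  have "\<bar>row X i \<bullet> w\<bar> = \<bar>\<Sum>l<n. X $$ (i,l) * w $ l\<bar>"
    using X i w unfolding scalar_prod_def by (auto simp: atLeast0LessThan intro!: arg_cong[where f=abs] sum.cong)
  also have "\<dots> \<le> (\<Sum>l<n. \<bar>X $$ (i,l) * w $ l\<bar>)" by (rule sum_abs)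
  also have "\<dots> \<le> (\<Sum>l<n. b * \<bar>w $ l\<bar>)"
    by (intro sum_mono) (auto simp: abs_mult intro: mult_right_mono b)
  finally show ?thesis by (simp add: sum_distrib_left)
qed

lemma decay_zero:
  fixes x K c q :: real
  assumes "\<And>N. \<bar>x\<bar> \<le> c * q ^ N * K" "0 \<le> q" "q < 1"
  shows "x = 0"
proof -
  have "(\<lambda>N. c * q ^ N * K) \<longlonglongrightarrow> c * 0 * K"
    using assms by (intro tendsto_intros) auto
  hence "\<bar>x\<bar> \<le> 0" using assms(1) by (intro LIMSEQ_le_const[of _ 0]) auto
  thus ?thesis by simp
qed



lemma one_smult_mat': "(1::'a::monoid_mult) \<cdot>\<^sub>m X = X"
  by (rule eq_matI) auto

lemma resolvent_main:
  fixes A :: "real mat"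
  assumes A: "A \<in> carrier_mat n n" and t: "0 < t"
    and q: "0 \<le> q" "q < 1"
    and dec: "\<And>k i j. i < n \<Longrightarrow> j < n \<Longrightarrow> \<bar>t ^ k * (A ^\<^sub>m k) $$ (i,j)\<bar> \<le> c * q ^ k"
    and nonneg: "\<And>i j. i < n \<Longrightarrow> j < n \<Longrightarrow> A $$ (i,j) \<ge> 0"
  shows "\<exists>R. mat_inverse (1\<^sub>m n - t \<cdot>\<^sub>m A) = Some R \<and> (1\<^sub>m n - t \<cdot>\<^sub>m A) * R = 1\<^sub>m n
     \<and> R * (1\<^sub>m n - t \<cdot>\<^sub>m A) = 1\<^sub>m n \<and> R \<in> carrier_mat n n
     \<and> (\<forall>i j k. i < n \<longrightarrow> j < n \<longrightarrow> t ^ k * (A ^\<^sub>m k) $$ (i,j) \<le> R $$ (i,j))"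
proof -
  define M where "M = 1\<^sub>m n - t \<cdot>\<^sub>m A"
  define P where "P k = (t ^ k) \<cdot>\<^sub>m (A ^\<^sub>m k)" for k
  have M: "M \<in> carrier_mat n n" unfolding M_def using A by auto
  have P: "P k \<in> carrier_mat n n" for k unfolding P_def using A by (auto intro: pow_carrier_mat)
  have Pe: "P k $$ (i,j) = t ^ k * (A ^\<^sub>m k) $$ (i,j)" if "i < n" "j < n" for i j k
    unfolding P_def using that A by (auto simp: pow_carrier_mat)
  have PS: "P (Suc k) = t \<cdot>\<^sub>m (P k * A)" for k
  proof -
    have Ak: "A ^\<^sub>m k \<in> carrier_mat n n" using A by (rule pow_carrier_mat)
    show ?thesis unfolding P_def using mult_smult_assoc_mat[OF Ak A, of "t^k"]
      by (simp add: smult_smult_mat' mult.commute)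
  qed
  have Anonneg: "(A ^\<^sub>m k) $$ (i,j) \<ge> 0" if "i < n" "j < n" for i j k
    using that
  proof (induct k arbitrary: j)
    case 0 then show ?case using A by auto
  next
    case (Suc k)
    have Ak: "A ^\<^sub>m k \<in> carrier_mat n n" using A by (rule pow_carrier_mat)
    have "(A ^\<^sub>m Suc k) $$ (i,j) = (\<Sum>l\<in>{0..<n}. (A ^\<^sub>m k) $$ (i,l) * A $$ (l,j))"
      using Suc(2,3) Ak A by (simp add: scalar_prod_def)
    also have "\<dots> \<ge> 0" using Suc nonneg by (intro sum_nonneg) auto
    finally show ?case .
  qed
  have "det M \<noteq> 0"
  proof
    assume "det M = 0"
    then obtain v where v: "v \<in> carrier_vec n" "v \<noteq> 0\<^sub>v n" "M *\<^sub>v v = 0\<^sub>v n"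
      using det_0_iff_vec_prod_zero_field[OF M] by auto
    have "M *\<^sub>v v = v - t \<cdot>\<^sub>v (A *\<^sub>v v)" unfolding M_def
      using minus_mult_distrib_mat_vec[of "1\<^sub>m n" n n "t \<cdot>\<^sub>m A" v] A v(1)
      by (simp add: smult_mat_vec'[OF A v(1)])
    hence e: "v - t \<cdot>\<^sub>v (A *\<^sub>v v) = 0\<^sub>v n" using v(3) by simp
    have vA: "v = t \<cdot>\<^sub>v (A *\<^sub>v v)"
    proof (rule eq_vecI)
      fix i assume "i < dim_vec (t \<cdot>\<^sub>v (A *\<^sub>v v))"
      hence i: "i < n" using A by simp
      have "(v - t \<cdot>\<^sub>v (A *\<^sub>v v)) $ i = 0\<^sub>v n $ i" by (simp only: e)
      thus "v $ i = (t \<cdot>\<^sub>v (A *\<^sub>v v)) $ i" using i A v(1) by simp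
    qed (use A v(1) in simp)
    have vP: "P k *\<^sub>v v = v" for k
    proof (induct k)
      case 0 then show ?case using v(1) A by (simp add: P_def one_smult_mat')
    next
      case (Suc k)
      have "P (Suc k) *\<^sub>v v = t \<cdot>\<^sub>v ((P k * A) *\<^sub>v v)" unfolding PS
        using P A v(1) by (intro smult_mat_vec') auto
      also have "\<dots> = t \<cdot>\<^sub>v (P k *\<^sub>v (A *\<^sub>v v))" using assoc_mult_mat_vec[OF P A v(1)] by simp
      also have "\<dots> = P k *\<^sub>v (t \<cdot>\<^sub>v (A *\<^sub>v v))" using P A v(1)
        by (subst mult_mat_vec[OF P]) auto
      also have "\<dots> = v" using vA Suc by simp
      finally show ?case .
    qed
    have "v $ i = 0" if i: "i < n" for i
    proof (rule decay_zero[OF _ q])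
      fix N
      have "v $ i = (P N *\<^sub>v v) $ i" using vP by simp
      also have "\<dots> = row (P N) i \<bullet> v" using P[of N] i by simp
      finally show "\<bar>v $ i\<bar> \<le> c * q ^ N * (\<Sum>l<n. \<bar>v $ l\<bar>)"
        using row_bound[OF P i v(1), where b="c * q ^ N"] dec Pe i by auto
    qed
    hence "v = 0\<^sub>v n" using v(1) by (intro eq_vecI) auto
    with v(2) show False by simp
  qed
  from inv_exists[OF M this] obtain R where R: "mat_inverse M = Some R" "M * R = 1\<^sub>m n"
    "R * M = 1\<^sub>m n" "R \<in> carrier_mat n n" by blast
  have MR: "M * R = R - t \<cdot>\<^sub>m (A * R)" unfolding M_def
    using minus_mult_distrib_mat[of "1\<^sub>m n" n n "t \<cdot>\<^sub>m A" R n] A R(4)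
    by (simp add: mult_smult_assoc_mat[OF A R(4)])
  have Rexp: "R = 1\<^sub>m n + t \<cdot>\<^sub>m (A * R)"
    using arg_cong[OF MR[unfolded R(2)], of "\<lambda>X. X $$ _"] A R(4)
    by (intro eq_matI) (auto simp del: index_mult_mat(1))
  have PR: "P N * R = P N + P (Suc N) * R" for N
  proof -
    have AR: "A * R \<in> carrier_mat n n" using A R(4) by simp
    have "P N * R = P N * 1\<^sub>m n + P N * (t \<cdot>\<^sub>m (A * R))"
      by (subst Rexp, rule mult_add_distrib_mat[OF P]) (use AR in auto)
    also have "\<dots> = P N + t \<cdot>\<^sub>m ((P N * A) * R)"
      using P[of N] AR A R(4) by (simp add: mult_smult_distrib[OF P AR] assoc_mult_mat[OF P A R(4)])
    also have "\<dots> = P N + P (Suc N) * R"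
    proof -
      have PA: "P N * A \<in> carrier_mat n n" using P[of N] A by simp
      show ?thesis unfolding PS mult_smult_assoc_mat[OF PA R(4)] ..
    qed
    finally show ?thesis .
  qed
  have Rsum: "R $$ (i,j) = (\<Sum>k<N. P k $$ (i,j)) + (P N * R) $$ (i,j)" if ij: "i < n" "j < n" for i j N
  proof (induct N)
    case 0 then show ?case using R(4) ij A by (simp add: P_def one_smult_mat')
  next
    case (Suc N)
    have "(P N * R) $$ (i,j) = P N $$ (i,j) + (P (Suc N) * R) $$ (i,j)"
      by (subst PR) (use P[of N] P[of "Suc N"] R(4) ij in simp)
    with Suc show ?case by simp
  qed
  have lim: "(\<lambda>N. \<Sum>k<N. P k $$ (i,j)) \<longlonglongrightarrow> R $$ (i,j)" if ij: "i < n" "j < n" for i j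
  proof -
    define K where "K = (\<Sum>l<n. \<bar>col R j $ l\<bar>)"
    have bd: "\<bar>(P N * R) $$ (i,j)\<bar> \<le> c * q ^ N * K" for N
    proof -
      have "(P N * R) $$ (i,j) = row (P N) i \<bullet> col R j" using P[of N] R(4) ij by simp
      thus ?thesis unfolding K_def
        using row_bound[OF P ij(1), where w="col R j" and b="c * q ^ N"] dec Pe ij R(4) by auto
    qed
    have "(\<lambda>N. c * q ^ N * K) \<longlonglongrightarrow> c * 0 * K" using q by (intro tendsto_intros) auto
    hence h0: "(\<lambda>N. c * q ^ N * K) \<longlonglongrightarrow> 0" by simp
    have "(\<lambda>N. \<bar>(P N * R) $$ (i,j)\<bar>) \<longlonglongrightarrow> 0"
    proof (rule real_tendsto_sandwich[where f="\<lambda>_. 0" and h="\<lambda>N. c * q ^ N * K"])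
      show "\<forall>\<^sub>F N in sequentially. 0 \<le> \<bar>(P N * R) $$ (i,j)\<bar>" by simp
      show "\<forall>\<^sub>F N in sequentially. \<bar>(P N * R) $$ (i,j)\<bar> \<le> c * q ^ N * K" using bd by simp
    qed (rule tendsto_const, rule h0)
    hence "(\<lambda>N. (P N * R) $$ (i,j)) \<longlonglongrightarrow> 0" by (simp only: tendsto_rabs_zero_iff)
    hence "(\<lambda>N. R $$ (i,j) - (P N * R) $$ (i,j)) \<longlonglongrightarrow> R $$ (i,j) - 0"
      by (intro tendsto_intros)
    moreover have "(\<lambda>N. R $$ (i,j) - (P N * R) $$ (i,j)) = (\<lambda>N. \<Sum>k<N. P k $$ (i,j))"
    proof
      fix N show "R $$ (i,j) - (P N * R) $$ (i,j) = (\<Sum>k<N. P k $$ (i,j))"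
        using Rsum[OF ij, of N] by linarith
    qed
    ultimately show ?thesis by simp
  qed
  have low: "t ^ k * (A ^\<^sub>m k) $$ (i,j) \<le> R $$ (i,j)" if ij: "i < n" "j < n" for i j k
  proof -
    have inc: "incseq (\<lambda>N. \<Sum>k<N. P k $$ (i,j))"
      by (rule incseq_SucI) (use Pe ij Anonneg t in auto)
    have "P k $$ (i,j) \<le> (\<Sum>k'<Suc k. P k' $$ (i,j))"
      using Pe ij Anonneg t by (intro member_le_sum) auto
    also have "\<dots> \<le> R $$ (i,j)" by (rule incseq_le[OF inc lim[OF ij]])
    finally show ?thesis using Pe ij by simp
  qed
  show ?thesis using R low unfolding M_def by blast
qed



lemma sum_insert_index:
  assumes j: "j < n"
  shows "(\<Sum>l\<in>{0..<n}. f l) = f j + (\<Sum>k\<in>{0..<n-1}. f (insert_index j k))"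
proof -
  have "(\<Sum>l\<in>{0..<n}. f l) = f j + (\<Sum>l\<in>{0..<n}-{j}. f l)"
    using j by (subst sum.remove[of _ j]) auto
  moreover have "insert_index j ` {0..<n-1} = {0..<n}-{j}"
  proof
    show "insert_index j ` {0..<n-1} \<subseteq> {0..<n}-{j}" using j by (auto simp: insert_index_def)
    show "{0..<n}-{j} \<subseteq> insert_index j ` {0..<n-1}"
    proof
      fix l assume l: "l \<in> {0..<n}-{j}"
      hence "l = insert_index j (delete_index j l)" by (simp add: insert_delete_index)
      moreover have "delete_index j l \<in> {0..<n-1}" using l j by (auto simp: delete_index_def)
      ultimately show "l \<in> insert_index j ` {0..<n-1}" by blast
    qed
  qed
  moreover have "inj_on (insert_index j) {0..<n-1}"
    by (rule inj_onI) (metis delete_insert_index)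
  ultimately show ?thesis using sum.reindex[of "insert_index j" "{0..<n-1}" f] by (simp add: comp_def)
qed

lemma ins_del_pos: "i \<noteq> j \<Longrightarrow> insert_index j (del_pos j i) = i"
  unfolding insert_index_def del_pos_def by auto

lemma del_pos_lt: "i < n \<Longrightarrow> j < n \<Longrightarrow> i \<noteq> j \<Longrightarrow> del_pos j i < n - 1"
  unfolding del_pos_def by auto

lemma cut_eq:
  fixes A R :: "real mat"
  assumes A: "A \<in> carrier_mat n n" and t: "0 < t"
    and R: "(1\<^sub>m n - t \<cdot>\<^sub>m A) * R = 1\<^sub>m n" "R * (1\<^sub>m n - t \<cdot>\<^sub>m A) = 1\<^sub>m n" "R \<in> carrier_mat n n"
    and ij: "i < n" "j < n" "i \<noteq> j" and Rjj: "R $$ (j,j) \<noteq> 0"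
  shows "R $$ (i,j) = R $$ (j,j) * cut_term A t i j"
proof -
  define M where "M = 1\<^sub>m n - t \<cdot>\<^sub>m A"
  have M: "M \<in> carrier_mat n n" unfolding M_def using A by auto
  define N where "N = (1/t) \<cdot>\<^sub>m 1\<^sub>m (n - 1) - mat_delete A j j"
  have N: "N \<in> carrier_mat (n-1) (n-1)" unfolding N_def using A by auto
  have dA: "dim_row A = n" using A by auto
  have Mij: "M $$ (a,b) = (if a = b then 1 else 0) - t * A $$ (a,b)" if "a < n" "b < n" for a b
    unfolding M_def using that A by auto
  have "det M * det R = 1" using det_mult[OF M R(3)] R(1) unfolding M_def by simp
  hence dM: "det M \<noteq> 0" by auto
  have MR: "M * R = 1\<^sub>m n" using R(1) unfolding M_def .
  have "adj_mat M * M * R = adj_mat M * (M * R)" by (rule assoc_mult_mat[OF adj_mat(1)[OF M] M R(3)])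
  also have "\<dots> = adj_mat M" unfolding MR using adj_mat(1)[OF M] by simp
  finally have "adj_mat M * M * R = adj_mat M" .
  hence "det M \<cdot>\<^sub>m R = adj_mat M" using adj_mat[OF M] R(3)
    by (simp add: mult_smult_assoc_mat[of "1\<^sub>m n" n n R n])
  hence "det M * R $$ (j,j) = cofactor M j j"
    using ij R(3) M by (auto simp: adj_mat_def dest!: arg_cong[where f="\<lambda>X. X $$ (j,j)"])
  hence "det (mat_delete M j j) \<noteq> 0" using dM Rjj unfolding cofactor_def by auto
  moreover have "mat_delete M j j = t \<cdot>\<^sub>m N"
  proof (rule eq_matI)
    fix a b assume ab: "a < dim_row (t \<cdot>\<^sub>m N)" "b < dim_col (t \<cdot>\<^sub>m N)"
    hence ab': "a < n - 1" "b < n - 1" using N by auto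
    have ia: "insert_index j a < n" "insert_index j b < n" using ab' ij by (auto simp: insert_index_def)
    have "(insert_index j a = insert_index j b) = (a = b)"
      by (metis delete_insert_index)
    thus "mat_delete M j j $$ (a,b) = (t \<cdot>\<^sub>m N) $$ (a,b)"
      using ab' M A ia t unfolding mat_delete_def N_def
      by (auto simp: Mij insert_index_def[symmetric] right_diff_distrib)
  qed (use M N in auto)
  ultimately have "det N \<noteq> 0" using N by simp
  from inv_exists[OF N this] obtain Q where Q: "mat_inverse N = Some Q" "Q * N = 1\<^sub>m (n-1)"
    "Q \<in> carrier_mat (n-1) (n-1)" by blast
  define x where "x = vec (n-1) (\<lambda>k. R $$ (insert_index j k, j))"
  define a where "a = vec_delete (col A j) j"
  have x: "x \<in> carrier_vec (n-1)" unfolding x_def by simp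
  have a: "a \<in> carrier_vec (n-1)" unfolding a_def vec_delete_def using A by simp
  have Nx: "N *\<^sub>v x = R $$ (j,j) \<cdot>\<^sub>v a"
  proof (rule eq_vecI)
    fix p assume "p < dim_vec (R $$ (j,j) \<cdot>\<^sub>v a)"
    hence p: "p < n - 1" using a by simp
    define P where "P = insert_index j p"
    have P: "P < n" "P \<noteq> j" unfolding P_def using p ij by (auto simp: insert_index_def)
    have "(M * R) $$ (P,j) = 0" using R(1) P ij unfolding M_def by simp
    hence "(\<Sum>l\<in>{0..<n}. M $$ (P,l) * R $$ (l,j)) = 0" using P ij M R(3)
      by (simp add: scalar_prod_def)
    hence "(\<Sum>l\<in>{0..<n}. ((if P = l then 1 else 0) - t * A $$ (P,l)) * R $$ (l,j)) = 0"
      using P by (simp add: Mij)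
    moreover have "(\<Sum>l\<in>{0..<n}. ((if P = l then 1 else 0) - t * A $$ (P,l)) * R $$ (l,j))
       = (\<Sum>l\<in>{0..<n}. (if P = l then R $$ (l,j) else 0) - t * (A $$ (P,l) * R $$ (l,j)))"
      by (intro sum.cong refl) (auto simp: algebra_simps)
    moreover have "\<dots> = R $$ (P,j) - t * (\<Sum>l\<in>{0..<n}. A $$ (P,l) * R $$ (l,j))"
      using P by (simp add: sum_subtractf sum_distrib_left)
    ultimately have e: "R $$ (P,j) - t * (\<Sum>l\<in>{0..<n}. A $$ (P,l) * R $$ (l,j)) = 0"
      by simp
    have s: "(\<Sum>l\<in>{0..<n}. A $$ (P,l) * R $$ (l,j)) = A $$ (P,j) * R $$ (j,j)
       + (\<Sum>k\<in>{0..<n-1}. A $$ (P,insert_index j k) * R $$ (insert_index j k,j))"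
      by (rule sum_insert_index[OF ij(2)])
    have "(N *\<^sub>v x) $ p = (\<Sum>k\<in>{0..<n-1}. N $$ (p,k) * x $ k)"
      using p N x by (simp add: scalar_prod_def)
    also have "\<dots> = (\<Sum>k\<in>{0..<n-1}. ((if p = k then 1/t else 0) - A $$ (P,insert_index j k)) * R $$ (insert_index j k,j))"
      unfolding N_def x_def P_def using p A ij
      by (intro sum.cong refl) (auto simp: mat_delete_def insert_index_def)
    also have "\<dots> = (\<Sum>k\<in>{0..<n-1}. (if p = k then R $$ (insert_index j k,j) / t else 0) - A $$ (P,insert_index j k) * R $$ (insert_index j k,j))"
      by (intro sum.cong refl) (auto simp: algebra_simps)
    also have "\<dots> = R $$ (P,j) / t - (\<Sum>k\<in>{0..<n-1}. A $$ (P,insert_index j k) * R $$ (insert_index j k,j))"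
      using p unfolding P_def by (simp add: sum_subtractf)
    also have "\<dots> = A $$ (P,j) * R $$ (j,j)" using e s t by (simp add: field_simps)
    also have "\<dots> = (R $$ (j,j) \<cdot>\<^sub>v a) $ p"
      unfolding a_def vec_delete_def P_def using p A ij P(1)[unfolded P_def] by simp
    finally show "(N *\<^sub>v x) $ p = (R $$ (j,j) \<cdot>\<^sub>v a) $ p" .
  qed (use N a in simp)
  have "x = Q *\<^sub>v (N *\<^sub>v x)" using Q(2) Q(3) N x by (simp add: assoc_mult_mat_vec[symmetric])
  also have "\<dots> = R $$ (j,j) \<cdot>\<^sub>v (Q *\<^sub>v a)" unfolding Nx using Q(3) a by (rule mult_mat_vec)
  finally have xa: "x = R $$ (j,j) \<cdot>\<^sub>v (Q *\<^sub>v a)" .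
  define p where "p = del_pos j i"
  have p: "p < n - 1" unfolding p_def using ij by (rule del_pos_lt)
  have "R $$ (i,j) = x $ p" unfolding x_def p_def using p ins_del_pos[OF ij(3)] p_def by simp
  also have "\<dots> = R $$ (j,j) * (row Q p \<bullet> a)" unfolding xa using p Q(3) by simp
  also have "row Q p \<bullet> a = cut_term A t i j"
    unfolding cut_term_def dA N_def[symmetric] Q(1) p_def a_def by simp
  finally show ?thesis .
qed



lemma wadj_carrier: "wadj n E ends w \<in> carrier_mat n n" unfolding wadj_def by simp

lemma wadj_index: "i < n \<Longrightarrow> j < n \<Longrightarrow> wadj n E ends w $$ (i,j) = (\<Sum>e\<in>{e\<in>E. ends e = {i,j}}. w e)"
  unfolding wadj_def by simp

theorem theorem2:
  fixes n :: nat and E :: "'e set" and ends :: "'e \<Rightarrow> nat set" and w :: "'e \<Rightarrow> real"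
    and A :: "real mat" and t :: real and i j :: nat
  assumes "n \<ge> 2"
    and "finite E"
    and "\<forall>e\<in>E. ends e \<subseteq> {0..<n} \<and> ends e \<noteq> {} \<and> card (ends e) \<le> 2"
    and "\<forall>e\<in>E. w e > 0"
    and "multigraph_connected n E ends"
    and "A = wadj n E ends w"
    and "0 < t" and "t < 1 / spectral_radius (map_mat complex_of_real A)"
    and "i < n" and "j < n" and "i \<noteq> j"
  shows "dist_t A t i j = - (1/2) * ln (cut_term A t i j * cut_term A t j i)"
proof -
  note n = assms(1) and fin = assms(2) and ends = assms(3) and wpos = assms(4)
    and conn = assms(5) and Adef = assms(6) and t = assms(7) and tr = assms(8)
    and ij = assms(9-11)
  have A: "A \<in> carrier_mat n n" unfolding Adef by (rule wadj_carrier)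
  have Ae: "A $$ (x,y) = (\<Sum>e\<in>{e\<in>E. ends e = {x,y}}. w e)" if "x < n" "y < n" for x y
    unfolding Adef using that by (rule wadj_index)
  have Asym: "A $$ (x,y) = A $$ (y,x)" if "x < n" "y < n" for x y
    using that by (simp add: Ae insert_commute)
  have Anonneg: "A $$ (x,y) \<ge> 0" if "x < n" "y < n" for x y
    using that wpos by (simp add: Ae) (intro sum_nonneg, auto simp: less_imp_le)
  have Apos: "A $$ (x,y) > 0" if "x < n" "y < n" "e \<in> E" "ends e = {x,y}" for x y e
  proof -
    have "0 < (\<Sum>e\<in>{e\<in>E. ends e = {x,y}}. w e)"
      using that fin wpos by (intro sum_pos2[of _ e]) (auto simp: less_imp_le)
    thus ?thesis using that Ae by simp
  qed
  have Apow_nonneg: "(A ^\<^sub>m k) $$ (x,y) \<ge> 0" if "x < n" "y < n" for x y k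
    using that
  proof (induct k arbitrary: y)
    case 0 then show ?case using A by auto
  next
    case (Suc k)
    have Ak: "A ^\<^sub>m k \<in> carrier_mat n n" using A by (rule pow_carrier_mat)
    have "(A ^\<^sub>m Suc k) $$ (x,y) = (\<Sum>l\<in>{0..<n}. (A ^\<^sub>m k) $$ (x,l) * A $$ (l,y))"
      using Suc(2,3) Ak A by (simp add: scalar_prod_def)
    also have "\<dots> \<ge> 0" using Suc Anonneg by (intro sum_nonneg) auto
    finally show ?case .
  qed
  have reach: "\<exists>k. (A ^\<^sub>m k) $$ (x,y) > 0" if xy: "x < n" "y < n" for x y
  proof -
    have "(\<lambda>a b. \<exists>e\<in>E. ends e = {a,b})\<^sup>*\<^sup>* x y" using conn xy unfolding multigraph_connected_def by blast
    then have "y < n \<longrightarrow> (\<exists>k. (A ^\<^sub>m k) $$ (x,y) > 0)"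
    proof (induct rule: rtranclp_induct)
      case base then show ?case using xy A by (intro impI exI[of _ 0]) auto
    next
      case (step y z)
      then obtain e where e: "e \<in> E" "ends e = {y,z}" by blast
      have yz: "y < n" "z < n" using ends e by auto
      from step(3) yz obtain k where k: "(A ^\<^sub>m k) $$ (x,y) > 0" by blast
      have Ak: "A ^\<^sub>m k \<in> carrier_mat n n" using A by (rule pow_carrier_mat)
      have "0 < (A ^\<^sub>m k) $$ (x,y) * A $$ (y,z)" using k Apos[OF yz e] by simp
      also have "\<dots> \<le> (\<Sum>l\<in>{0..<n}. (A ^\<^sub>m k) $$ (x,l) * A $$ (l,z))"
        using yz xy Apow_nonneg Anonneg
        by (intro member_le_sum[where i=y and f="\<lambda>l. (A ^\<^sub>m k) $$ (x,l) * A $$ (l,z)"]) auto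
      also have "\<dots> = (A ^\<^sub>m Suc k) $$ (x,z)"
        using yz xy Ak A by (simp add: scalar_prod_def)
      finally show ?case by blast
    qed
    thus ?thesis using xy by blast
  qed
  have n0: "n > 0" using n by auto
  from power_decay[OF A n0 t tr] obtain c q where cq: "0 \<le> q" "q < 1"
    "\<And>k i j. i < n \<Longrightarrow> j < n \<Longrightarrow> \<bar>t ^ k * (A ^\<^sub>m k) $$ (i,j)\<bar> \<le> c * q ^ k" by blast
  from resolvent_main[OF A t cq Anonneg] obtain R where
    R: "mat_inverse (1\<^sub>m n - t \<cdot>\<^sub>m A) = Some R" "(1\<^sub>m n - t \<cdot>\<^sub>m A) * R = 1\<^sub>m n"
     "R * (1\<^sub>m n - t \<cdot>\<^sub>m A) = 1\<^sub>m n" "R \<in> carrier_mat n n"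
     and low: "\<And>i j k. i < n \<Longrightarrow> j < n \<Longrightarrow> t ^ k * (A ^\<^sub>m k) $$ (i,j) \<le> R $$ (i,j)"
    by blast
  have res: "resolvent A t = R" unfolding resolvent_def using A R(1) by simp
  have Rpos: "R $$ (x,y) > 0" if xy: "x < n" "y < n" for x y
  proof -
    obtain k where "(A ^\<^sub>m k) $$ (x,y) > 0" using reach[OF xy] by blast
    hence "0 < t ^ k * (A ^\<^sub>m k) $$ (x,y)" using t by simp
    also have "\<dots> \<le> R $$ (x,y)" using low xy by blast
    finally show ?thesis .
  qed
  define M where "M = 1\<^sub>m n - t \<cdot>\<^sub>m A"
  have M: "M \<in> carrier_mat n n" unfolding M_def using A by auto
  have MT: "transpose_mat M = M"
    by (rule eq_matI) (use M A Asym in \<open>auto simp: M_def\<close>)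
  have "transpose_mat (M * R) = transpose_mat R * M"
    using transpose_mult[OF M R(4)] MT by simp
  hence RTM: "transpose_mat R * M = 1\<^sub>m n" using R(2) unfolding M_def by simp
  have RT: "transpose_mat R \<in> carrier_mat n n" using R(4) by simp
  have "transpose_mat R = transpose_mat R * (M * R)" using R(2) RT unfolding M_def by simp
  also have "\<dots> = (transpose_mat R * M) * R" using assoc_mult_mat[OF RT M R(4)] by simp
  also have "\<dots> = R" using RTM R(4) by simp
  finally have RT_eq: "transpose_mat R = R" .
  have Rsym: "R $$ (j,i) = R $$ (i,j)"
    using arg_cong[OF RT_eq, of "\<lambda>X. X $$ (i,j)"] ij R(4) by simp
  have c1: "cut_term A t i j = R $$ (i,j) / R $$ (j,j)"
    using cut_eq[OF A t R(2-4) ij] Rpos[OF ij(2) ij(2)] by (simp add: field_simps)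
  have c2: "cut_term A t j i = R $$ (i,j) / R $$ (i,i)"
    using cut_eq[OF A t R(2-4) ij(2) ij(1)] ij(3) Rpos[OF ij(1) ij(1)] Rsym by (simp add: field_simps)
  have p1: "R $$ (i,i) > 0" "R $$ (j,j) > 0" "R $$ (i,j) > 0" using Rpos ij by auto
  have "ln (cut_term A t i j * cut_term A t j i)
      = 2 * ln (R $$ (i,j)) - ln (R $$ (i,i)) - ln (R $$ (j,j))"
    using p1 unfolding c1 c2 by (simp add: ln_mult ln_div)
  thus ?thesis unfolding dist_t_def res by (simp add: field_simps)
qed


end
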